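(* The function $\epsilon':[1,\infty)\to\mathbb{R}$ is increasing and negative. For each integer $N\ge1$, $\epsilon'(x)=\epsilon'(y)$ whenever $N\le x\le y<N+1$, and $\epsilon'(x)<\epsilon'(y)$ whenever $N\le x<N+1\le y$. If moreover $\hat w=\sup_xw(x)<\infty$, then for all $\lambda\ge1$, $\frac{C}{(2\hat w+\lfloor\lambda\rfloor-1)^2}\le|\epsilon'(\lambda)|\le\frac{\hat w}{\lfloor\lambda\rfloor(\lfloor\lambda\rfloor+1)}$, where $C=\int_{\mathbb{S}}w(x)\pi(dx)\in[1,\hat w]$.
   Context: Let $\pi,q$ be probability densities with respect to a $\sigma$-finite measure $\mu$ on $\mathbb{X}$ with $q>0$ wherever $\pi>0$; $\pi(dx)=\pi(x)\mu(dx)$, $q(dx)=q(x)\mu(dx)$, $\mathbb{S}=\{\pi>0\}$, $w=\pi/q$ on $\mathbb{S}$ and $0$ elsewhere. For integer $N\ge1$, $\epsilon(N)=\int_{\mathbb{S}}\int_{\mathbb{X}^{N-1}}\frac{w(z_1)}{\sum_{i=1}^Nw(z_i)}\prod_{n=2}^Nq(dz_n)\pi(dz_1)$ (average rejection probability of i-SIR with $N$ proposals), and for $\lambda\ge1$ the extended derivative is $\epsilon'(\lambda)=\epsilon(\lfloor\lambda\rfloor+1)-\epsilon(\lfloor\lambda\rfloor)$. *)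

theory Defs
  imports "HOL-Probability.Probability"
begin

definition wgt :: "('a \<Rightarrow> real) \<Rightarrow> ('a \<Rightarrow> real) \<Rightarrow> 'a \<Rightarrow> real" where
  "wgt p q x = (if p x > 0 then p x / q x else 0)"

text \<open>Average rejection probability of i-SIR with N proposals:
  eps(N) = int_S int_{X^(N-1)} w(z1) / (sum_{i=1}^N w(z_i)) prod_{n=2}^N q(dz_n) pi(dz_1).\<close>
definition eps :: "'a measure \<Rightarrow> ('a \<Rightarrow> real) \<Rightarrow> ('a \<Rightarrow> real) \<Rightarrow> nat \<Rightarrow> real" where
  "eps M p q N =
     (\<integral> z1. indicator {x \<in> space M. p x > 0} z1 *
        (\<integral> z. wgt p q z1 / (wgt p q z1 + (\<Sum>i\<in>{2..N}. wgt p q (z i)))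
           \<partial>(PiM {2..N} (\<lambda>_. density M (\<lambda>x. ennreal (q x)))))
      \<partial>(density M (\<lambda>x. ennreal (p x))))"

definition eps' :: "'a measure \<Rightarrow> ('a \<Rightarrow> real) \<Rightarrow> ('a \<Rightarrow> real) \<Rightarrow> real \<Rightarrow> real" where
  "eps' M p q l = eps M p q (nat \<lfloor>l\<rfloor> + 1) - eps M p q (nat \<lfloor>l\<rfloor>)"

end

theory Submission
  imports Defs
begin

locale isir =
  fixes M :: "'a measure" and p q :: "'a \<Rightarrow> real"
  assumes sf: "sigma_finite_measure M"
    and p_meas[measurable]: "p \<in> borel_measurable M" and q_meas[measurable]: "q \<in> borel_measurable M"
    and p_nonneg: "\<forall>x\<in>space M. 0 \<le> p x" and q_nonneg: "\<forall>x\<in>space M. 0 \<le> q x"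
    and p_dens: "(\<integral>\<^sup>+ x. ennreal (p x) \<partial>M) = 1"
    and q_dens: "(\<integral>\<^sup>+ x. ennreal (q x) \<partial>M) = 1"
    and q_pos: "\<forall>x\<in>space M. p x > 0 \<longrightarrow> q x > 0"
begin

definition "Q = density M (\<lambda>x. ennreal (q x))"
abbreviation "w \<equiv> wgt p q"

lemma sets_Q[measurable_cong]: "sets Q = sets M" by (simp add: Q_def)
lemma space_Q[simp]: "space Q = space M" by (simp add: Q_def)

lemma w_meas[measurable]: "w \<in> borel_measurable M"
  unfolding wgt_def[abs_def] by measurable

lemma w_measQ[measurable]: "w \<in> borel_measurable Q"
  using w_meas by (simp add: Q_def)

lemma w_nonneg: "x \<in> space M \<Longrightarrow> 0 \<le> w x"
  using p_nonneg q_nonneg by (auto simp: wgt_def)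

lemma Q_prob: "prob_space Q"
proof (rule prob_spaceI)
  have "emeasure Q (space Q) = (\<integral>\<^sup>+ x. ennreal (q x) * indicator (space M) x \<partial>M)"
    unfolding Q_def by (subst emeasure_density) auto
  also have "\<dots> = (\<integral>\<^sup>+ x. ennreal (q x) \<partial>M)"
    by (rule nn_integral_cong) auto
  finally show "emeasure Q (space Q) = 1" using q_dens by simp
qed

sublocale Qp: prob_space Q by (rule Q_prob)

lemma qw_eq: "x \<in> space M \<Longrightarrow> q x * w x = (if p x > 0 then p x else 0)"
  using q_pos by (auto simp: wgt_def)

lemma nn_w: "(\<integral>\<^sup>+ x. ennreal (w x) \<partial>Q) = 1"
proof -
  have "(\<integral>\<^sup>+ x. ennreal (w x) \<partial>Q) = (\<integral>\<^sup>+ x. ennreal (q x) * ennreal (w x) \<partial>M)"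
    unfolding Q_def by (subst nn_integral_density) auto
  also have "\<dots> = (\<integral>\<^sup>+ x. ennreal (p x) \<partial>M)"
  proof (rule nn_integral_cong)
    fix x assume x: "x \<in> space M"
    have "ennreal (q x) * ennreal (w x) = ennreal (q x * w x)"
      using x q_nonneg w_nonneg by (simp add: ennreal_mult)
    also have "\<dots> = ennreal (p x)" using qw_eq[OF x] p_nonneg x by auto
    finally show "ennreal (q x) * ennreal (w x) = ennreal (p x)" .
  qed
  finally show ?thesis using p_dens by simp
qed

lemma w_int: "integrable Q w"
  by (rule integrableI_nonneg) (auto simp: nn_w w_nonneg)

lemma w_integral: "(\<integral>x. w x \<partial>Q) = 1"
  by (subst integral_eq_nn_integral) (auto simp: nn_w w_nonneg)

sublocale PP: product_prob_space "\<lambda>_::nat. Q" by unfold_locales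

definition P :: "nat set \<Rightarrow> (nat \<Rightarrow> 'a) measure" where "P K = PiM K (\<lambda>_. Q)"

lemma space_P: "space (P K) = PiE K (\<lambda>_. space M)"
  by (simp add: P_def space_PiM)

lemma prob_P: "prob_space (P K)"
  unfolding P_def by (rule prob_space_PiM) (rule Q_prob)

lemma X_meas[measurable]: "i \<in> K \<Longrightarrow> (\<lambda>z. w (z i)) \<in> borel_measurable (P K)"
  unfolding P_def by measurable

lemma X_nonneg: "z \<in> space (P K) \<Longrightarrow> i \<in> K \<Longrightarrow> 0 \<le> w (z i)"
  by (auto simp: space_P intro!: w_nonneg)

lemma integral_restrict:
  fixes f :: "(nat \<Rightarrow> 'a) \<Rightarrow> real"
  assumes K: "finite K" "J \<subseteq> K" and f[measurable]: "f \<in> borel_measurable (P J)"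
    and eq: "\<And>z. z \<in> space (P K) \<Longrightarrow> f (restrict z J) = f z"
  shows "integral\<^sup>L (P J) f = integral\<^sup>L (P K) f"
proof -
  have "integral\<^sup>L (P J) f = integral\<^sup>L (distr (P K) (P J) (\<lambda>z. restrict z J)) f"
    unfolding P_def using PP.distr_restrict[OF K(2,1)] by simp
  also have "\<dots> = integral\<^sup>L (P K) (\<lambda>z. f (restrict z J))"
    by (rule integral_distr[of "\<lambda>z. restrict z J" "P K" "P J" f]) (use K f in \<open>auto simp: P_def intro!: measurable_restrict_subset\<close>)
  also have "\<dots> = integral\<^sup>L (P K) f" by (rule Bochner_Integration.integral_cong) (auto simp: eq)
  finally show ?thesis .
qed

lemma integral_perm:
  fixes f :: "(nat \<Rightarrow> 'a) \<Rightarrow> real"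
  assumes K: "finite K" "g permutes K" and f[measurable]: "f \<in> borel_measurable (P K)"
  shows "integral\<^sup>L (P K) (\<lambda>z. f (\<lambda>i\<in>K. z (g i))) = integral\<^sup>L (P K) f"
proof -
  have inj: "inj_on g K" using K(2) by (meson permutes_inj_on)
  have gK: "g \<in> K \<rightarrow> K" using K(2) by (auto simp: permutes_in_image)
  have "distr (P K) (P K) (\<lambda>z. \<lambda>i\<in>K. z (g i)) = P K"
    using distr_PiM_reindex[of K "\<lambda>_. Q" g K, OF _ inj gK] Q_prob unfolding P_def by simp
  then have "integral\<^sup>L (P K) f = integral\<^sup>L (distr (P K) (P K) (\<lambda>z. \<lambda>i\<in>K. z (g i))) f" by simp
  also have "\<dots> = integral\<^sup>L (P K) (\<lambda>z. f (\<lambda>i\<in>K. z (g i)))"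
    apply (rule integral_distr[of "\<lambda>z. \<lambda>i\<in>K. z (g i)" "P K" "P K" f])
    using gK f unfolding P_def by (auto intro!: measurable_PiM_single' simp: Pi_iff space_PiM PiE_iff)
  finally show ?thesis by simp
qed

lemma X_int: "i \<in> K \<Longrightarrow> integrable (P K) (\<lambda>z. w (z i))"
proof -
  assume i: "i \<in> K"
  have d: "distr (P K) Q (\<lambda>z. z i) = Q"
    unfolding P_def using distr_PiM_component[of K "\<lambda>_. Q" i] i Q_prob by simp
  have "integrable (distr (P K) Q (\<lambda>z. z i)) w" using d w_int by simp
  then show ?thesis
    by (subst (asm) integrable_distr_eq) (use i in \<open>auto simp: P_def\<close>)
qed

lemma sum_nonneg_P: "z \<in> space (P K) \<Longrightarrow> J \<subseteq> K \<Longrightarrow> 0 \<le> (\<Sum>i\<in>J. w (z i))"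
  by (auto intro!: sum_nonneg X_nonneg)

lemma rep:
  assumes n: "1 \<le> n"
  shows "eps M p q n = integral\<^sup>L (P {1..n}) (\<lambda>z. w (z 1) * w (z 1) / (\<Sum>i\<in>{1..n}. w (z i)))"
proof -
  define I where "I = {2..n}"
  define h where "h z1 z = w z1 / (w z1 + (\<Sum>i\<in>I. w (z i)))" for z1 z
  define G where "G z1 = integral\<^sup>L (P I) (h z1)" for z1
  have sfPI: "sigma_finite_measure (P I)"
    using prob_P[of I] by (simp add: prob_space_imp_sigma_finite)
  have h_meas[measurable]: "(\<lambda>(z1, z). h z1 z) \<in> borel_measurable (M \<Otimes>\<^sub>M P I)"
    unfolding h_def P_def by measurable
  have G_meas[measurable]: "G \<in> borel_measurable M"
    unfolding G_def using sigma_finite_measure.borel_measurable_lebesgue_integral[OF sfPI h_meas] by simp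
  have h_bd: "0 \<le> h z1 z \<and> h z1 z \<le> 1" if "z1 \<in> space M" "z \<in> space (P I)" for z1 z
    using w_nonneg[OF that(1)] sum_nonneg_P[OF that(2), of I]
    by (auto simp: h_def divide_simps)
  have h_int: "integrable (P I) (h z1)" if "z1 \<in> space M" for z1
  proof -
    interpret prob_space "P I" by (rule prob_P)
    show ?thesis
      apply (rule integrable_const_bound[where B=1])
      using h_bd[OF that] apply (auto intro!: AE_I2)
      using h_meas that by measurable
  qed
  have G_nonneg: "0 \<le> G z1" if "z1 \<in> space M" for z1
    unfolding G_def using h_bd[OF that] by (auto intro!: integral_nonneg_AE AE_I2)
  have "eps M p q n = integral\<^sup>L (density M (\<lambda>x. ennreal (p x))) (\<lambda>z1. indicator {x \<in> space M. p x > 0} z1 * G z1)"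
    unfolding eps_def Q_def[symmetric] P_def[symmetric] G_def h_def I_def by simp
  also have "\<dots> = integral\<^sup>L M (\<lambda>z1. p z1 * (indicator {x \<in> space M. p x > 0} z1 * G z1))"
    by (subst integral_density) (use p_nonneg in auto)
  also have "\<dots> = integral\<^sup>L M (\<lambda>z1. q z1 * (w z1 * G z1))"
  proof (rule Bochner_Integration.integral_cong)
    fix x assume x: "x \<in> space M"
    show "p x * (indicator {x \<in> space M. p x > 0} x * G x) = q x * (w x * G x)"
      using qw_eq[OF x] x by (auto simp: indicator_def algebra_simps wgt_def)
  qed simp
  also have "\<dots> = integral\<^sup>L Q (\<lambda>z1. w z1 * G z1)"
    unfolding Q_def by (subst integral_density) (use q_nonneg in auto)
  also have "\<dots> = enn2real (\<integral>\<^sup>+ z1. ennreal (w z1 * G z1) \<partial>Q)"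
    by (rule integral_eq_nn_integral) (auto intro!: AE_I2 mult_nonneg_nonneg w_nonneg G_nonneg)
  also have "(\<integral>\<^sup>+ z1. ennreal (w z1 * G z1) \<partial>Q) = (\<integral>\<^sup>+ z1. (\<integral>\<^sup>+ z. ennreal (w z1 * h z1 z) \<partial>P I) \<partial>Q)"
  proof (rule nn_integral_cong)
    fix z1 assume z1: "z1 \<in> space Q"
    have "(\<integral>\<^sup>+ z. ennreal (w z1 * h z1 z) \<partial>P I) = ennreal (integral\<^sup>L (P I) (\<lambda>z. w z1 * h z1 z))"
      apply (rule nn_integral_eq_integral)
      using h_int[of z1] z1 h_bd w_nonneg by (auto intro!: AE_I2)
    then show "ennreal (w z1 * G z1) = (\<integral>\<^sup>+ z. ennreal (w z1 * h z1 z) \<partial>P I)"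
      by (simp add: G_def)
  qed
  also have "\<dots> = (\<integral>\<^sup>+ z. ennreal (w (z 1) * w (z 1) / (\<Sum>i\<in>{1..n}. w (z i))) \<partial>P (insert 1 I))"
  proof -
    have eqI: "{1..n} = insert 1 I" using n by (auto simp: I_def)
    have "(\<integral>\<^sup>+ z. ennreal (w (z 1) * w (z 1) / (\<Sum>i\<in>{1..n}. w (z i))) \<partial>P (insert 1 I))
      = (\<integral>\<^sup>+ y. (\<integral>\<^sup>+ x. ennreal (w ((x(1:=y)) 1) * w ((x(1:=y)) 1) / (\<Sum>i\<in>insert 1 I. w ((x(1:=y)) i))) \<partial>P I) \<partial>Q)"
      unfolding P_def eqI
      by (rule PP.product_nn_integral_insert_rev) (auto simp: I_def)
    also have "\<dots> = (\<integral>\<^sup>+ z1. (\<integral>\<^sup>+ z. ennreal (w z1 * h z1 z) \<partial>P I) \<partial>Q)"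
    proof (intro nn_integral_cong)
      fix y x
      have "(\<Sum>i\<in>insert 1 I. w ((x(1:=y)) i)) = w y + (\<Sum>i\<in>I. w (x i))"
        by (subst sum.insert) (auto simp: I_def intro!: sum.cong)
      then show "ennreal (w ((x(1:=y)) 1) * w ((x(1:=y)) 1) / (\<Sum>i\<in>insert 1 I. w ((x(1:=y)) i))) = ennreal (w y * h y x)"
        by (simp add: h_def)
    qed
    finally show ?thesis by simp
  qed
  also have "enn2real \<dots> = integral\<^sup>L (P {1..n}) (\<lambda>z. w (z 1) * w (z 1) / (\<Sum>i\<in>{1..n}. w (z i)))"
  proof -
    have eqI: "insert 1 I = {1..n}" using n by (auto simp: I_def)
    show ?thesis unfolding eqI
      by (rule integral_eq_nn_integral[symmetric]) (use n in \<open>auto intro!: AE_I2 divide_nonneg_nonneg X_nonneg sum_nonneg_P\<close>)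
  qed
  finally show ?thesis .
qed

abbreviation SS :: "nat \<Rightarrow> (nat \<Rightarrow> 'a) \<Rightarrow> real" where
  "SS n z \<equiv> (\<Sum>i\<in>{1..n}. w (z i))"

lemma SS_Suc: "SS (Suc n) z = SS n z + w (z (Suc n))"
  by simp

lemma bound_lemma: "0 \<le> (a::real) \<Longrightarrow> a \<le> A \<Longrightarrow> 0 \<le> b \<Longrightarrow> b \<le> B \<Longrightarrow> a * a * b / (B * A) \<le> a"
proof -
  assume h: "0 \<le> a" "a \<le> A" "0 \<le> b" "b \<le> B"
  show ?thesis
  proof (cases "a = 0 \<or> b = 0")
    case True then show ?thesis using h by (elim disjE) simp_all
  next
    case False
    then have "a > 0" "b > 0" using h by auto
    then have "A > 0" "B > 0" using h by linarith+
    have "a * a * b / (B * A) = a * (a / A) * (b / B)" by (simp add: field_simps)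
    also have "\<dots> \<le> a * 1 * 1"
      using h \<open>A>0\<close> \<open>B>0\<close> by (intro mult_mono) (auto simp: divide_simps)
    finally show ?thesis by simp
  qed
qed

lemma int_bound_X1:
  fixes f :: "(nat \<Rightarrow> 'a) \<Rightarrow> real"
  assumes "1 \<in> K" "f \<in> borel_measurable (P K)" "\<And>z. z \<in> space (P K) \<Longrightarrow> \<bar>f z\<bar> \<le> w (z 1)"
  shows "integrable (P K) f"
  apply (rule Bochner_Integration.integrable_bound[OF X_int[OF assms(1)] assms(2)])
  using assms(3) X_nonneg[OF _ assms(1)] by (auto intro!: AE_I2)

lemma int_bound_1:
  fixes f :: "(nat \<Rightarrow> 'a) \<Rightarrow> real"
  assumes "f \<in> borel_measurable (P K)" "\<And>z. z \<in> space (P K) \<Longrightarrow> \<bar>f z\<bar> \<le> B"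
  shows "integrable (P K) f"
proof -
  interpret prob_space "P K" by (rule prob_P)
  show ?thesis using assms by (intro integrable_const_bound[where B=B]) (auto intro!: AE_I2)
qed

lemma SS_meas: "{1..n} \<subseteq> K \<Longrightarrow> SS n \<in> borel_measurable (P K)"
  by (rule borel_measurable_sum) (auto intro: X_meas)

lemma X1_le_SS: "z \<in> space (P K) \<Longrightarrow> {1..n} \<subseteq> K \<Longrightarrow> 1 \<le> n \<Longrightarrow> w (z 1) \<le> SS n z"
  by (rule member_le_sum) (auto intro!: X_nonneg)

lemma eps_K:
  assumes n: "1 \<le> n" and K: "finite K" "{1..n} \<subseteq> K"
  shows "eps M p q n = integral\<^sup>L (P K) (\<lambda>z. w (z 1) * w (z 1) / SS n z)"
  unfolding rep[OF n]
  apply (rule integral_restrict[OF K])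
  subgoal using n by (intro borel_measurable_divide borel_measurable_times X_meas SS_meas) auto
  subgoal for z using n by (auto intro!: sum.cong)
  done

lemma eps_int:
  assumes n: "1 \<le> n" and K: "{1..n} \<subseteq> K"
  shows "integrable (P K) (\<lambda>z. w (z 1) * w (z 1) / SS n z)"
proof (rule int_bound_X1)
  show "1 \<in> K" using n K by auto
  show "(\<lambda>z. w (z 1) * w (z 1) / SS n z) \<in> borel_measurable (P K)"
    using K n by (intro borel_measurable_divide borel_measurable_times X_meas SS_meas) auto
  fix z assume z: "z \<in> space (P K)"
  have a: "0 \<le> w (z 1)" "w (z 1) \<le> SS n z" using X_nonneg[OF z, of 1] X1_le_SS[OF z K n] n K by auto
  have "w (z 1) * w (z 1) * 1 / (1 * SS n z) \<le> w (z 1)" by (rule bound_lemma) (use a in auto)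
  moreover have "0 \<le> w (z 1) * w (z 1) / SS n z" using a by auto
  ultimately show "\<bar>w (z 1) * w (z 1) / SS n z\<bar> \<le> w (z 1)" by simp
qed

definition D :: "nat \<Rightarrow> (nat \<Rightarrow> 'a) \<Rightarrow> real" where
  "D n z = w (z 1) * w (z 1) * w (z (Suc n)) / (SS (Suc n) z * SS n z)"

lemma D_meas[measurable]: "{1..Suc n} \<subseteq> K \<Longrightarrow> D n \<in> borel_measurable (P K)"
  unfolding D_def by (intro borel_measurable_divide borel_measurable_times X_meas SS_meas) auto

lemma D_bounds:
  assumes z: "z \<in> space (P K)" and n: "1 \<le> n" and K: "{1..Suc n} \<subseteq> K"
  shows "0 \<le> D n z" "D n z \<le> w (z 1)"
proof -
  have K': "{1..n} \<subseteq> K" using K by auto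
  have a: "0 \<le> w (z 1)" "w (z 1) \<le> SS n z" using X_nonneg[OF z, of 1] X1_le_SS[OF z K' n] n K by auto
  have sK: "Suc n \<in> K" using K by auto
  have b: "0 \<le> w (z (Suc n))" "w (z (Suc n)) \<le> SS (Suc n) z"
    using X_nonneg[OF z sK] sum_nonneg_P[OF z K'] by auto
  show "0 \<le> D n z" unfolding D_def using a b by auto
  show "D n z \<le> w (z 1)" unfolding D_def using bound_lemma[OF a b] .
qed

lemma D_int: "1 \<le> n \<Longrightarrow> {1..Suc n} \<subseteq> K \<Longrightarrow> integrable (P K) (D n)"
  apply (rule int_bound_X1)
  subgoal by auto
  subgoal by auto
  subgoal for z using D_bounds[of z K n] by auto
  done

lemma diff_alg: "0 \<le> (a::real) \<Longrightarrow> a \<le> R \<Longrightarrow> 0 \<le> b \<Longrightarrow> a * a / (R + b) - a * a / R = - (a * a * b / ((R + b) * R))"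
proof (cases "R = 0")
  case True
  assume "0 \<le> a" "a \<le> R"
  then have "a = 0" using True by simp
  then show ?thesis by simp
next
  case False
  assume h: "0 \<le> a" "a \<le> R" "0 \<le> b"
  then have "R > 0" "R + b > 0" using False by auto
  then show ?thesis by (simp add: field_simps)
qed

lemma d_eq:
  assumes n: "1 \<le> n" and K: "finite K" "{1..Suc n} \<subseteq> K"
  shows "eps M p q (Suc n) - eps M p q n = - integral\<^sup>L (P K) (D n)"
proof -
  have K': "{1..n} \<subseteq> K" using K by auto
  have e1: "eps M p q (Suc n) = integral\<^sup>L (P K) (\<lambda>z. w (z 1) * w (z 1) / SS (Suc n) z)"
    by (rule eps_K) (use K in auto)
  have "eps M p q (Suc n) - eps M p q n = integral\<^sup>L (P K) (\<lambda>z. w (z 1) * w (z 1) / SS (Suc n) z - w (z 1) * w (z 1) / SS n z)"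
    unfolding e1 eps_K[OF n K(1) K']
    by (rule Bochner_Integration.integral_diff[symmetric]) (use eps_int[OF _ K(2)] eps_int[OF n K'] n in auto)
  also have "\<dots> = integral\<^sup>L (P K) (\<lambda>z. - D n z)"
  proof (rule Bochner_Integration.integral_cong)
    fix z assume z: "z \<in> space (P K)"
    have a: "0 \<le> w (z 1)" "w (z 1) \<le> SS n z" using X_nonneg[OF z, of 1] X1_le_SS[OF z K' n] n K by auto
    have sK: "Suc n \<in> K" using K by auto
    have b: "0 \<le> w (z (Suc n))" using X_nonneg[OF z sK] .
    show "w (z 1) * w (z 1) / SS (Suc n) z - w (z 1) * w (z 1) / SS n z = - D n z"
      unfolding D_def SS_Suc using diff_alg[OF a b] by simp
  qed simp
  finally show ?thesis by simp
qed

lemma Qpos: "emeasure Q {x \<in> space M. 0 < w x} > 0"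
proof (rule ccontr)
  assume "\<not> ?thesis"
  then have "emeasure Q {x \<in> space M. 0 < w x} = 0" by (simp add: zero_less_iff_neq_zero)
  then have "AE x in Q. \<not> 0 < w x"
    by (subst AE_iff_measurable[of "{x \<in> space M. 0 < w x}"]) auto
  then have "AE x in Q. w x = 0"
  proof (rule AE_mp, intro AE_I2 impI)
    fix x assume "x \<in> space Q" "\<not> 0 < w x"
    then show "w x = 0" using w_nonneg[of x] by simp
  qed
  then have "integral\<^sup>L Q w = 0" by (rule integral_eq_zero_AE)
  then show False using w_integral by simp
qed

lemma int_pos:
  fixes f :: "(nat \<Rightarrow> 'a) \<Rightarrow> real"
  assumes K: "finite K" "A \<subseteq> K" and f: "integrable (P K) f"
    and nn: "\<And>z. z \<in> space (P K) \<Longrightarrow> 0 \<le> f z"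
    and pos: "\<And>z. z \<in> space (P K) \<Longrightarrow> (\<forall>i\<in>A. 0 < w (z i)) \<Longrightarrow> 0 < f z"
  shows "0 < integral\<^sup>L (P K) f"
proof -
  define E where "E i = (if i \<in> A then {x \<in> space M. 0 < w x} else space M)" for i
  define B where "B = PiE K E"
  have E_sets: "E i \<in> sets Q" for i unfolding E_def by auto
  have B_sets: "B \<in> sets (P K)"
    unfolding B_def P_def using K E_sets by (intro sets_PiM_I_finite) auto
  have "emeasure (P K) B = (\<Prod>i\<in>K. emeasure Q (E i))"
    unfolding B_def P_def using K E_sets by (intro PP.emeasure_PiM) auto
  moreover have "emeasure Q (E i) > 0" for i
    using Qpos Qp.emeasure_space_1 by (auto simp: E_def)
  ultimately have Bpos: "emeasure (P K) B \<noteq> 0"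
    using K by (simp add: prod_zero_iff) (metis not_gr_zero)
  have "integral\<^sup>L (P K) f \<noteq> 0"
  proof
    assume "integral\<^sup>L (P K) f = 0"
    then have "AE z in P K. f z = 0"
      using integral_nonneg_eq_0_iff_AE[OF f] nn by (auto intro!: AE_I2)
    then have "AE z in P K. z \<notin> B"
    proof (rule AE_mp, intro AE_I2 impI)
      fix z assume z: "z \<in> space (P K)" "f z = 0"
      show "z \<notin> B"
      proof
        assume "z \<in> B"
        then have "\<forall>i\<in>A. 0 < w (z i)" using K unfolding B_def E_def PiE_iff by (metis (no_types, lifting) mem_Collect_eq subsetD)
        then show False using pos[OF z(1)] z(2) by simp
      qed
    qed
    then have "emeasure (P K) B = 0"
      using AE_iff_measurable[OF B_sets, of "\<lambda>z. z \<notin> B"] sets.sets_into_space[OF B_sets] by auto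
    then show False using Bpos by simp
  qed
  moreover have "0 \<le> integral\<^sup>L (P K) f" using nn by (auto intro!: integral_nonneg_AE AE_I2)
  ultimately show ?thesis by simp
qed

lemma D_pos:
  assumes n: "1 \<le> n"
  shows "0 < integral\<^sup>L (P {1..Suc n}) (D n)"
proof (rule int_pos[where A="{1, Suc n}"])
  show "integrable (P {1..Suc n}) (D n)" using D_int[OF n] by simp
  fix z assume z: "z \<in> space (P {1..Suc n})"
  show "0 \<le> D n z" using D_bounds[OF z n] by simp
  assume pos: "\<forall>i\<in>{1, Suc n}. 0 < w (z i)"
  have "w (z 1) \<le> SS n z" using X1_le_SS[OF z _ n] by auto
  moreover have "SS n z \<le> SS (Suc n) z" using X_nonneg[OF z, of "Suc n"] by simp
  ultimately show "0 < D n z" using pos unfolding D_def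
    by (intro divide_pos_pos mult_pos_pos) auto
qed (use n in auto)

lemma d_neg:
  assumes n: "1 \<le> n"
  shows "eps M p q (Suc n) - eps M p q n < 0"
  using d_eq[OF n, of "{1..Suc n}"] D_pos[OF n] by simp

lemma mono_alg:
  fixes a S b c :: real
  assumes "0 \<le> a" "a \<le> S" "0 \<le> b" "0 \<le> c"
  shows "a * a * c / ((S + b + c) * (S + b)) \<le> a * a * c / ((S + c) * S)"
    and "0 < a \<Longrightarrow> 0 < b \<Longrightarrow> 0 < c \<Longrightarrow> a * a * c / ((S + b + c) * (S + b)) < a * a * c / ((S + c) * S)"
proof -
  show "a * a * c / ((S + b + c) * (S + b)) \<le> a * a * c / ((S + c) * S)"
  proof (cases "a = 0")
    case False
    then have "S > 0" using assms by auto
    then show ?thesis using assms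
      by (intro divide_left_mono mult_mono mult_pos_pos) auto
  qed simp
  assume pos: "0 < a" "0 < b" "0 < c"
  then have "S > 0" using assms by auto
  then show "a * a * c / ((S + b + c) * (S + b)) < a * a * c / ((S + c) * S)" using assms pos
    by (intro divide_strict_left_mono mult_strict_mono mult_pos_pos) auto
qed

lemma D_mono:
  assumes n: "1 \<le> n"
  defines "K \<equiv> {1..Suc (Suc n)}"
  shows "integral\<^sup>L (P K) (D (Suc n)) < integral\<^sup>L (P K) (D n)"
proof -
  define g where "g = Transposition.transpose (Suc n) (Suc (Suc n))"
  have gp: "g permutes K" unfolding g_def K_def by (rule permutes_swap_id) auto
  define D' where "D' z = w (z 1) * w (z 1) * w (z (Suc (Suc n))) / ((SS n z + w (z (Suc (Suc n)))) * SS n z)" for z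
  have D'_eq: "D n (\<lambda>i\<in>K. z (g i)) = D' z" for z
  proof -
    have "SS n (\<lambda>i\<in>K. z (g i)) = SS n z"
      by (rule sum.cong) (auto simp: K_def g_def)
    moreover have "(\<lambda>i\<in>K. z (g i)) 1 = z 1" "(\<lambda>i\<in>K. z (g i)) (Suc n) = z (Suc (Suc n))"
      using n by (auto simp: K_def g_def)
    ultimately show ?thesis unfolding D_def D'_def SS_Suc by simp
  qed
  have "integral\<^sup>L (P K) (D n) = integral\<^sup>L (P K) (\<lambda>z. D n (\<lambda>i\<in>K. z (g i)))"
    by (rule integral_perm[symmetric]) (use gp in \<open>auto simp: K_def\<close>)
  also have "\<dots> = integral\<^sup>L (P K) D'" by (simp add: D'_eq)
  finally have eq: "integral\<^sup>L (P K) (D n) = integral\<^sup>L (P K) D'" .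
  have SSn: "SS n \<in> borel_measurable (P K)" by (rule SS_meas) (auto simp: K_def)
  have D'_meas: "D' \<in> borel_measurable (P K)"
    unfolding D'_def
    by (intro borel_measurable_divide borel_measurable_times borel_measurable_add X_meas SSn) (auto simp: K_def)
  have D'_int: "integrable (P K) D'"
  proof (rule int_bound_X1[OF _ D'_meas])
    fix z assume z: "z \<in> space (P K)"
    have a: "0 \<le> w (z 1)" "w (z 1) \<le> SS n z" using X_nonneg[OF z, of 1] X1_le_SS[OF z _ n] n by (auto simp: K_def)
    have b: "0 \<le> w (z (Suc (Suc n)))" "w (z (Suc (Suc n))) \<le> SS n z + w (z (Suc (Suc n)))"
      using X_nonneg[OF z, of "Suc (Suc n)"] a by (auto simp: K_def)
    show "\<bar>D' z\<bar> \<le> w (z 1)" unfolding D'_def using bound_lemma[OF a b] a b by simp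
  qed (auto simp: K_def)
  have "0 < integral\<^sup>L (P K) (\<lambda>z. D' z - D (Suc n) z)"
  proof (rule int_pos[where A="{1, Suc n, Suc (Suc n)}"])
    show "integrable (P K) (\<lambda>z. D' z - D (Suc n) z)"
      using D'_int D_int[of "Suc n" K] n by (auto simp: K_def)
    fix z assume z: "z \<in> space (P K)"
    have a: "0 \<le> w (z 1)" "w (z 1) \<le> SS n z" using X_nonneg[OF z, of 1] X1_le_SS[OF z _ n] n by (auto simp: K_def)
    have bc: "0 \<le> w (z (Suc n))" "0 \<le> w (z (Suc (Suc n)))" using X_nonneg[OF z] by (auto simp: K_def)
    have DS: "D (Suc n) z = w (z 1) * w (z 1) * w (z (Suc (Suc n))) / ((SS n z + w (z (Suc n)) + w (z (Suc (Suc n)))) * (SS n z + w (z (Suc n))))"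
      unfolding D_def SS_Suc by simp
    show "0 \<le> D' z - D (Suc n) z" unfolding DS D'_def using mono_alg(1)[OF a bc] by simp
    assume "\<forall>i\<in>{1, Suc n, Suc (Suc n)}. 0 < w (z i)"
    then show "0 < D' z - D (Suc n) z" unfolding DS D'_def using mono_alg(2)[OF a bc] by simp
  qed (auto simp: K_def)
  also have "\<dots> = integral\<^sup>L (P K) D' - integral\<^sup>L (P K) (D (Suc n))"
    by (rule Bochner_Integration.integral_diff) (use D'_int D_int[of "Suc n" K] n in \<open>auto simp: K_def\<close>)
  finally show ?thesis using eq by simp
qed

lemma d_mono:
  assumes n: "1 \<le> n"
  shows "eps M p q (Suc n) - eps M p q n < eps M p q (Suc (Suc n)) - eps M p q (Suc n)"
proof -
  have "eps M p q (Suc n) - eps M p q n = - integral\<^sup>L (P {1..Suc (Suc n)}) (D n)"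
    by (rule d_eq[OF n]) auto
  moreover have "eps M p q (Suc (Suc n)) - eps M p q (Suc n) = - integral\<^sup>L (P {1..Suc (Suc n)}) (D (Suc n))"
    by (rule d_eq) (use n in auto)
  ultimately show ?thesis using D_mono[OF n] by simp
qed

lemma bound1: "0 \<le> (a::real) \<Longrightarrow> a \<le> A \<Longrightarrow> 0 \<le> b \<Longrightarrow> b \<le> B \<Longrightarrow> a * b / (B * A) \<le> 1"
proof -
  assume h: "0 \<le> a" "a \<le> A" "0 \<le> b" "b \<le> B"
  show ?thesis
  proof (cases "a = 0 \<or> b = 0")
    case True then show ?thesis using h by (elim disjE) simp_all
  next
    case False
    then have "a > 0" "b > 0" using h by auto
    then have "A > 0" "B > 0" using h by linarith+
    have "a * b / (B * A) = (a / A) * (b / B)" by (simp add: field_simps)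
    also have "\<dots> \<le> 1 * 1"
      using h \<open>A>0\<close> \<open>B>0\<close> by (intro mult_mono) (auto simp: divide_simps)
    finally show ?thesis by simp
  qed
qed

lemma SS_perm:
  assumes "g permutes {1..n}" "{1..n} \<subseteq> K" "\<forall>i\<in>K. g i \<in> K"
  shows "SS n (\<lambda>i\<in>K. z (g i)) = SS n z"
proof -
  have "SS n (\<lambda>i\<in>K. z (g i)) = (\<Sum>i\<in>{1..n}. w (z (g i)))"
    using assms(2) by (intro sum.cong) auto
  also have "\<dots> = SS n z"
    using sum.permute[OF assms(1), of "\<lambda>i. w (z i)"] by (simp add: comp_def)
  finally show ?thesis .
qed

lemma U_bound:
  assumes n: "1 \<le> n"
  shows "integral\<^sup>L (P {1..n}) (\<lambda>z. w (z n) / SS n z) \<le> 1 / real n"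
proof -
  define K where "K = {1..n}"
  define U where "U j z = w (z j) / SS n z" for j z
  have U_meas: "U j \<in> borel_measurable (P K)" if "j \<in> K" for j
    unfolding U_def using that by (intro borel_measurable_divide X_meas SS_meas) (auto simp: K_def)
  have U_int: "integrable (P K) (U j)" if j: "j \<in> K" for j
  proof (rule int_bound_1[OF U_meas[OF j], where B=1])
    fix z assume z: "z \<in> space (P K)"
    have "w (z j) \<le> SS n z" "0 \<le> w (z j)" using z j by (auto simp: K_def intro!: member_le_sum X_nonneg)
    then show "\<bar>U j z\<bar> \<le> 1" unfolding U_def by (auto simp: divide_simps)
  qed
  have eqj: "integral\<^sup>L (P K) (U j) = integral\<^sup>L (P K) (U n)" if j: "j \<in> K" for j
  proof -
    define g where "g = Transposition.transpose j n"
    have gp: "g permutes K" unfolding g_def using j n by (intro permutes_swap_id) (auto simp: K_def)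
    have "integral\<^sup>L (P K) (U n) = integral\<^sup>L (P K) (\<lambda>z. U n (\<lambda>i\<in>K. z (g i)))"
      by (rule integral_perm[symmetric]) (use gp U_meas n in \<open>auto simp: K_def\<close>)
    also have "\<dots> = integral\<^sup>L (P K) (U j)"
    proof (rule Bochner_Integration.integral_cong)
      fix z
      have "SS n (\<lambda>i\<in>K. z (g i)) = SS n z"
        by (rule SS_perm) (use gp permutes_in_image[OF gp] in \<open>auto simp: K_def\<close>)
      then show "U n (\<lambda>i\<in>K. z (g i)) = U j z" unfolding U_def using j n by (simp add: K_def g_def)
    qed simp
    finally show ?thesis by simp
  qed
  have "real n * integral\<^sup>L (P K) (U n) = (\<Sum>j\<in>K. integral\<^sup>L (P K) (U j))"
  proof -
    have "(\<Sum>j\<in>K. integral\<^sup>L (P K) (U j)) = (\<Sum>j\<in>K. integral\<^sup>L (P K) (U n))"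
      by (rule sum.cong) (auto simp: eqj)
    then show ?thesis by (simp add: K_def)
  qed
  also have "\<dots> = integral\<^sup>L (P K) (\<lambda>z. \<Sum>j\<in>K. U j z)"
    by (rule Bochner_Integration.integral_sum[symmetric]) (rule U_int)
  also have "\<dots> \<le> integral\<^sup>L (P K) (\<lambda>z. 1)"
  proof (rule Bochner_Integration.integral_mono)
    show "integrable (P K) (\<lambda>z. \<Sum>j\<in>K. U j z)" by (rule Bochner_Integration.integrable_sum) (rule U_int)
    interpret prob_space "P K" by (rule prob_P)
    show "integrable (P K) (\<lambda>z. 1)" by simp
    fix z assume z: "z \<in> space (P K)"
    have "(\<Sum>j\<in>K. U j z) = SS n z / SS n z" unfolding U_def K_def by (simp add: sum_divide_distrib[symmetric])
    then show "(\<Sum>j\<in>K. U j z) \<le> 1" by simp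
  qed
  also have "\<dots> = 1"
  proof -
    interpret prob_space "P K" by (rule prob_P)
    show ?thesis by (simp add: prob_space)
  qed
  finally show ?thesis using n unfolding U_def K_def by (simp add: field_simps)
qed

lemma T_bound:
  assumes n: "1 \<le> n"
  shows "integral\<^sup>L (P {1..Suc n}) (\<lambda>z. w (z 1) * w (z (Suc n)) / (SS (Suc n) z * SS n z)) \<le> 1 / (real n * (real n + 1))"
proof -
  define K where "K = {1..Suc n}"
  define T where "T j z = w (z j) * w (z (Suc n)) / (SS (Suc n) z * SS n z)" for j z
  have SSn: "SS n \<in> borel_measurable (P K)" by (rule SS_meas) (auto simp: K_def)
  have SSn1: "SS (Suc n) \<in> borel_measurable (P K)" by (rule SS_meas) (auto simp: K_def)
  have T_meas: "T j \<in> borel_measurable (P K)" if "j \<in> K" for j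
    unfolding T_def using that
    by (intro borel_measurable_divide borel_measurable_times X_meas SSn SSn1) (auto simp: K_def)
  have T_int: "integrable (P K) (T j)" if j: "j \<in> {1..n}" for j
  proof (rule int_bound_1[OF T_meas, where B=1])
    show "j \<in> K" using j by (auto simp: K_def)
    fix z assume z: "z \<in> space (P K)"
    have a: "0 \<le> w (z j)" "w (z j) \<le> SS n z" using z j by (auto simp: K_def intro!: member_le_sum X_nonneg)
    have b: "0 \<le> w (z (Suc n))" "w (z (Suc n)) \<le> SS (Suc n) z"
      using z sum_nonneg_P[OF z, of "{1..n}"] by (auto simp: K_def intro!: X_nonneg)
    show "\<bar>T j z\<bar> \<le> 1" unfolding T_def using bound1[OF a b] a b by simp
  qed
  have eqj: "integral\<^sup>L (P K) (T j) = integral\<^sup>L (P K) (T 1)" if j: "j \<in> {1..n}" for j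
  proof -
    define g where "g = Transposition.transpose 1 j"
    have gp: "g permutes K" unfolding g_def using j n by (intro permutes_swap_id) (auto simp: K_def)
    have gp': "g permutes {1..n}" unfolding g_def using j n by (intro permutes_swap_id) auto
    have gp'': "g permutes {1..Suc n}" unfolding g_def using j n by (intro permutes_swap_id) auto
    have "integral\<^sup>L (P K) (T 1) = integral\<^sup>L (P K) (\<lambda>z. T 1 (\<lambda>i\<in>K. z (g i)))"
      by (rule integral_perm[symmetric]) (use gp T_meas n in \<open>auto simp: K_def\<close>)
    also have "\<dots> = integral\<^sup>L (P K) (T j)"
    proof (rule Bochner_Integration.integral_cong)
      fix z
      have "SS n (\<lambda>i\<in>K. z (g i)) = SS n z"
        by (rule SS_perm[OF gp']) (use permutes_in_image[OF gp] in \<open>auto simp: K_def\<close>)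
      moreover have "SS (Suc n) (\<lambda>i\<in>K. z (g i)) = SS (Suc n) z"
        by (rule SS_perm[OF gp'']) (use permutes_in_image[OF gp] in \<open>auto simp: K_def\<close>)
      ultimately show "T 1 (\<lambda>i\<in>K. z (g i)) = T j z" unfolding T_def using j n by (simp add: K_def g_def)
    qed simp
    finally show ?thesis by simp
  qed
  have "real n * integral\<^sup>L (P K) (T 1) = (\<Sum>j\<in>{1..n}. integral\<^sup>L (P K) (T j))"
  proof -
    have "(\<Sum>j\<in>{1..n}. integral\<^sup>L (P K) (T j)) = (\<Sum>j\<in>{1..n}. integral\<^sup>L (P K) (T 1))"
      by (rule sum.cong[OF refl]) (rule eqj)
    then show ?thesis by simp
  qed
  also have "\<dots> = integral\<^sup>L (P K) (\<lambda>z. \<Sum>j\<in>{1..n}. T j z)"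
    by (rule Bochner_Integration.integral_sum[symmetric]) (rule T_int)
  also have "\<dots> \<le> integral\<^sup>L (P K) (\<lambda>z. w (z (Suc n)) / SS (Suc n) z)"
  proof (rule Bochner_Integration.integral_mono)
    show "integrable (P K) (\<lambda>z. \<Sum>j\<in>{1..n}. T j z)" by (rule Bochner_Integration.integrable_sum) (rule T_int)
    show "integrable (P K) (\<lambda>z. w (z (Suc n)) / SS (Suc n) z)"
    proof (rule int_bound_1[where B=1])
      show "(\<lambda>z. w (z (Suc n)) / SS (Suc n) z) \<in> borel_measurable (P K)"
        by (intro borel_measurable_divide X_meas SSn1) (auto simp: K_def)
      fix z assume z: "z \<in> space (P K)"
      have b: "0 \<le> w (z (Suc n))" "w (z (Suc n)) \<le> SS (Suc n) z"
        using z sum_nonneg_P[OF z, of "{1..n}"] by (auto simp: K_def intro!: X_nonneg)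
      then show "\<bar>w (z (Suc n)) / SS (Suc n) z\<bar> \<le> 1" by (auto simp: divide_simps)
    qed
    fix z assume z: "z \<in> space (P K)"
    have sum_eq: "(\<Sum>j\<in>{1..n}. T j z) = SS n z * w (z (Suc n)) / (SS (Suc n) z * SS n z)"
      unfolding T_def by (simp only: sum_divide_distrib sum_distrib_right)
    have b: "0 \<le> w (z (Suc n))" "0 \<le> SS n z"
      using z by (auto simp: K_def intro!: sum_nonneg X_nonneg)
    show "(\<Sum>j\<in>{1..n}. T j z) \<le> w (z (Suc n)) / SS (Suc n) z"
    proof (cases "SS n z = 0")
      case True then show ?thesis using b sum_eq by simp
    next
      case False then show ?thesis using sum_eq by simp
    qed
  qed
  also have "\<dots> \<le> 1 / real (Suc n)" unfolding K_def by (rule U_bound) simp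
  finally have "real n * integral\<^sup>L (P K) (T 1) \<le> 1 / (real n + 1)" by (simp add: add.commute)
  moreover have "\<And>x::real. real n * x \<le> 1 / (real n + 1) \<Longrightarrow> x \<le> 1 / (real n * (real n + 1))"
  proof -
    fix x :: real assume "real n * x \<le> 1 / (real n + 1)"
    moreover have "real n > 0" using n by simp
    ultimately show "x \<le> 1 / (real n * (real n + 1))"
      by (simp add: pos_le_divide_eq mult.commute mult.left_commute)
  qed
  ultimately have "integral\<^sup>L (P K) (T 1) \<le> 1 / (real n * (real n + 1))" by blast
  then show ?thesis unfolding K_def T_def .
qed

lemma space_ne: "space M \<noteq> {}"
proof
  assume e: "space M = {}"
  have "(\<integral>\<^sup>+ x. ennreal (p x) \<partial>M) = (\<integral>\<^sup>+ x. 0 \<partial>M)" by (rule nn_integral_cong) (simp add: e)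
  then show False using p_dens by simp
qed

end

locale isir_b = isir +
  assumes bdd: "bdd_above (wgt p q ` space M)"
begin

definition "wh = (SUP x\<in>space M. w x)"
definition "C = integral\<^sup>L Q (\<lambda>x. w x * w x)"

lemma w_le: "x \<in> space M \<Longrightarrow> w x \<le> wh"
  unfolding wh_def by (rule cSUP_upper[OF _ bdd])

lemma wh_nonneg: "0 \<le> wh"
proof -
  obtain x where "x \<in> space M" using space_ne by auto
  then show ?thesis using w_le[of x] w_nonneg[of x] by simp
qed

lemma ww_int: "integrable Q (\<lambda>x. w x * w x)"
proof (rule Qp.integrable_const_bound[where B="wh * wh"])
  show "AE x in Q. norm (w x * w x) \<le> wh * wh"
  proof (rule AE_I2)
    fix x assume "x \<in> space Q"
    then have "0 \<le> w x" "w x \<le> wh" using w_nonneg w_le by auto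
    then show "norm (w x * w x) \<le> wh * wh" by (simp add: mult_mono)
  qed
qed simp

lemma C_ge1: "1 \<le> C"
proof -
  have i1: "integrable Q (\<lambda>x. 2 * w x)" using w_int by simp
  have "0 \<le> integral\<^sup>L Q (\<lambda>x. (w x - 1)\<^sup>2)" by simp
  also have "integral\<^sup>L Q (\<lambda>x. (w x - 1)\<^sup>2) = integral\<^sup>L Q (\<lambda>x. (w x * w x - 2 * w x) + 1)"
    by (rule Bochner_Integration.integral_cong) (auto simp: power2_eq_square algebra_simps)
  also have "\<dots> = integral\<^sup>L Q (\<lambda>x. w x * w x - 2 * w x) + integral\<^sup>L Q (\<lambda>x. 1)"
    by (rule Bochner_Integration.integral_add) (use ww_int i1 in auto)
  also have "integral\<^sup>L Q (\<lambda>x. w x * w x - 2 * w x) = C - 2 * integral\<^sup>L Q w"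
    unfolding C_def by (subst Bochner_Integration.integral_diff) (use ww_int i1 in auto)
  finally show ?thesis using w_integral Qp.prob_space by simp
qed

lemma C_le: "C \<le> wh"
proof -
  have "C \<le> integral\<^sup>L Q (\<lambda>x. wh * w x)"
    unfolding C_def
  proof (rule Bochner_Integration.integral_mono)
    show "integrable Q (\<lambda>x. wh * w x)" using w_int by simp
    fix x assume "x \<in> space Q"
    then show "w x * w x \<le> wh * w x" using w_nonneg w_le by (auto intro: mult_right_mono)
  qed (rule ww_int)
  also have "\<dots> = wh" using w_integral by simp
  finally show ?thesis .
qed

lemma C_stmt: "(\<integral> x. indicator {x \<in> space M. p x > 0} x * w x \<partial>(density M (\<lambda>x. ennreal (p x)))) = C"
proof -
  have "(\<integral> x. indicator {x \<in> space M. p x > 0} x * w x \<partial>(density M (\<lambda>x. ennreal (p x))))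
     = integral\<^sup>L M (\<lambda>x. p x * (indicator {x \<in> space M. p x > 0} x * w x))"
    by (subst integral_density) (use p_nonneg in auto)
  also have "\<dots> = integral\<^sup>L M (\<lambda>x. q x * (w x * w x))"
  proof (rule Bochner_Integration.integral_cong)
    fix x assume x: "x \<in> space M"
    show "p x * (indicator {x \<in> space M. p x > 0} x * w x) = q x * (w x * w x)"
      using qw_eq[OF x] x by (auto simp: indicator_def algebra_simps wgt_def)
  qed simp
  also have "\<dots> = C"
    unfolding C_def Q_def by (subst integral_density) (use q_nonneg in auto)
  finally show ?thesis .
qed

lemma prod_int:
  assumes J: "finite J" "J \<subseteq> K" "finite K" "1 \<in> J"
    and f: "\<And>z. f z = (\<Prod>j\<in>J. (if j = 1 then (\<lambda>x. w x * w x) else w) (z j))"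
  shows "integral\<^sup>L (P K) f = C"
proof -
  define F where "F j = (if j = 1 then (\<lambda>x. w x * w x) else w)" for j :: nat
  have Fint: "integrable Q (F j)" for j using ww_int w_int by (auto simp: F_def)
  have fm: "f \<in> borel_measurable (P J)"
    unfolding f P_def by (rule PP.product_integrable_prod[THEN borel_measurable_integrable]) (use J Fint in \<open>auto simp: F_def\<close>)
  have "integral\<^sup>L (P K) f = integral\<^sup>L (P J) f"
    by (rule integral_restrict[symmetric]) (use J fm in \<open>auto simp: f\<close>)
  also have "\<dots> = (\<Prod>j\<in>J. integral\<^sup>L Q (F j))"
    unfolding f P_def F_def[symmetric] by (rule PP.product_integral_prod) (use J Fint in auto)
  also have "\<dots> = (\<Prod>j\<in>J. if j = 1 then C else 1)"
    by (rule prod.cong) (auto simp: F_def C_def w_integral)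
  also have "\<dots> = C" using J by (simp add: prod.If_cases Int_absorb1)
  finally show ?thesis .
qed

lemma D_upper:
  assumes n: "1 \<le> n"
  shows "integral\<^sup>L (P {1..Suc n}) (D n) \<le> wh / (real n * (real n + 1))"
proof -
  define K where "K = {1..Suc n}"
  define T where "T z = w (z 1) * w (z (Suc n)) / (SS (Suc n) z * SS n z)" for z
  have SSn: "SS n \<in> borel_measurable (P K)" by (rule SS_meas) (auto simp: K_def)
  have SSn1: "SS (Suc n) \<in> borel_measurable (P K)" by (rule SS_meas) (auto simp: K_def)
  have T_int: "integrable (P K) T"
  proof (rule int_bound_1[where B=1])
    show "T \<in> borel_measurable (P K)" unfolding T_def
      by (intro borel_measurable_divide borel_measurable_times X_meas SSn SSn1) (auto simp: K_def)
    fix z assume z: "z \<in> space (P K)"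
    have a: "0 \<le> w (z 1)" "w (z 1) \<le> SS n z" using z n by (auto simp: K_def intro!: member_le_sum X_nonneg)
    have b: "0 \<le> w (z (Suc n))" "w (z (Suc n)) \<le> SS (Suc n) z"
      using z sum_nonneg_P[OF z, of "{1..n}"] by (auto simp: K_def intro!: X_nonneg)
    show "\<bar>T z\<bar> \<le> 1" unfolding T_def using bound1[OF a b] a b by simp
  qed
  have "integral\<^sup>L (P K) (D n) \<le> integral\<^sup>L (P K) (\<lambda>z. wh * T z)"
  proof (rule Bochner_Integration.integral_mono)
    show "integrable (P K) (D n)" using D_int[OF n] by (simp add: K_def)
    show "integrable (P K) (\<lambda>z. wh * T z)" using T_int by simp
    fix z assume z: "z \<in> space (P K)"
    have a: "0 \<le> w (z 1)" "w (z 1) \<le> SS n z" using z n by (auto simp: K_def intro!: member_le_sum X_nonneg)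
    have b: "0 \<le> w (z (Suc n))" "0 \<le> SS n z"
      using z sum_nonneg_P[OF z, of "{1..n}"] by (auto simp: K_def intro!: X_nonneg)
    have T0: "0 \<le> T z" unfolding T_def using a b by simp
    have z1: "z 1 \<in> space M" using z unfolding space_P K_def by (auto simp: PiE_iff)
    have "D n z = w (z 1) * T z" unfolding D_def T_def by simp
    also have "\<dots> \<le> wh * T z" using w_le[OF z1] T0 by (intro mult_right_mono) auto
    finally show "D n z \<le> wh * T z" .
  qed
  also have "\<dots> = wh * integral\<^sup>L (P K) T" by simp
  also have "\<dots> \<le> wh * (1 / (real n * (real n + 1)))"
    using T_bound[OF n] wh_nonneg unfolding T_def K_def by (intro mult_left_mono) auto
  finally show ?thesis by (simp add: K_def)
qed

lemma tangent:
  fixes t t0 :: real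
  assumes "0 < t" "0 < t0"
  shows "1 / t0\<^sup>2 - 2 / t0 ^ 3 * (t - t0) \<le> 1 / t\<^sup>2"
proof -
  have eq: "(t0 - t)\<^sup>2 * (t0 + 2 * t) = t0 ^ 3 - 3 * t\<^sup>2 * t0 + 2 * t ^ 3"
    by (simp add: power2_eq_square power3_eq_cube algebra_simps)
  have "0 \<le> (t0 - t)\<^sup>2 * (t0 + 2 * t)" using assms by simp
  moreover have "(3 * t0 - 2 * t) * t\<^sup>2 = 3 * t\<^sup>2 * t0 - 2 * t ^ 3"
    by (simp add: power2_eq_square power3_eq_cube algebra_simps)
  ultimately have h: "(3 * t0 - 2 * t) * t\<^sup>2 \<le> t0 ^ 3" using eq by linarith
  have "1 / t0\<^sup>2 - 2 / t0 ^ 3 * (t - t0) = (3 * t0 - 2 * t) / t0 ^ 3"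
    using assms by (simp add: field_simps power2_eq_square power3_eq_cube)
  also have "\<dots> \<le> 1 / t\<^sup>2"
    using h assms by (simp add: divide_simps)
  finally show ?thesis .
qed

lemma wh_ge1: "1 \<le> wh" using C_ge1 C_le by simp

lemma X_le: "z \<in> space (P K) \<Longrightarrow> i \<in> K \<Longrightarrow> w (z i) \<le> wh"
  by (rule w_le) (auto simp: space_P PiE_iff)

lemma D_lower:
  assumes n: "1 \<le> n"
  shows "C / (2 * wh + real n - 1)\<^sup>2 \<le> integral\<^sup>L (P {1..Suc n}) (D n)"
proof -
  define K where "K = {1..Suc n}"
  define R where "R z = (\<Sum>i\<in>{2..n}. w (z i))" for z
  define m where "m = real n - 1"
  define c where "c = 2 * wh"
  define t0 where "t0 = c + m"
  define a where "a = 1 / t0\<^sup>2"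
  define b where "b = 2 / t0 ^ 3"
  define E2 where "E2 z = w (z 1) * w (z 1) * w (z (Suc n))" for z
  define E3 where "E3 i z = E2 z * w (z i)" for i z
  define L where "L z = (a + b * m) * E2 z - b * (\<Sum>i\<in>{2..n}. E3 i z)" for z
  have m0: "0 \<le> m" using n by (simp add: m_def)
  have t0pos: "0 < t0" using wh_ge1 m0 by (simp add: t0_def c_def)
  have sn1: "Suc n \<in> K" and o1: "1 \<in> K" using n by (auto simp: K_def)
  have E2_meas: "E2 \<in> borel_measurable (P K)"
    unfolding E2_def using sn1 o1 by (intro borel_measurable_times X_meas) auto
  have E3_meas: "E3 i \<in> borel_measurable (P K)" if "i \<in> {2..n}" for i
    unfolding E3_def using that by (intro borel_measurable_times X_meas E2_meas) (auto simp: K_def)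
  have Xb: "0 \<le> w (z i) \<and> w (z i) \<le> wh" if "z \<in> space (P K)" "i \<in> K" for z i
    using X_nonneg[OF that] X_le[OF that] by simp
  have E2_int: "integrable (P K) E2"
  proof (rule int_bound_1[OF E2_meas, where B="wh * wh * wh"])
    fix z assume z: "z \<in> space (P K)"
    have "0 \<le> E2 z" "E2 z \<le> wh * wh * wh"
      unfolding E2_def using Xb[OF z o1] Xb[OF z sn1] by (auto intro!: mult_mono)
    then show "\<bar>E2 z\<bar> \<le> wh * wh * wh" by simp
  qed
  have E3_int: "integrable (P K) (E3 i)" if i: "i \<in> {2..n}" for i
  proof (rule int_bound_1[OF E3_meas[OF i], where B="wh * wh * wh * wh"])
    fix z assume z: "z \<in> space (P K)"
    have iK: "i \<in> K" using i by (auto simp: K_def)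
    have "0 \<le> E3 i z" "E3 i z \<le> wh * wh * wh * wh"
      unfolding E3_def E2_def using Xb[OF z o1] Xb[OF z sn1] Xb[OF z iK] by (auto intro!: mult_mono)
    then show "\<bar>E3 i z\<bar> \<le> wh * wh * wh * wh" by simp
  qed
  have E2_val: "integral\<^sup>L (P K) E2 = C"
    by (rule prod_int[where J="{1, Suc n}"]) (use n in \<open>auto simp: K_def E2_def\<close>)
  have E3_val: "integral\<^sup>L (P K) (E3 i) = C" if i: "i \<in> {2..n}" for i
    by (rule prod_int[where J="{1, i, Suc n}"]) (use n i in \<open>auto simp: K_def E3_def E2_def\<close>)
  have L_int: "integrable (P K) L"
    unfolding L_def using E2_int E3_int
    by (intro Bochner_Integration.integrable_diff Bochner_Integration.integrable_mult_right Bochner_Integration.integrable_sum) auto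
  have "integral\<^sup>L (P K) L = (a + b * m) * integral\<^sup>L (P K) E2 - b * (\<Sum>i\<in>{2..n}. integral\<^sup>L (P K) (E3 i))"
    unfolding L_def using E2_int E3_int
    by (subst Bochner_Integration.integral_diff)
       (auto intro!: Bochner_Integration.integrable_sum simp: Bochner_Integration.integral_sum)
  also have "\<dots> = (a + b * m) * C - b * (m * C)"
    using n by (simp add: E2_val E3_val m_def of_nat_diff)
  also have "\<dots> = C / (2 * wh + real n - 1)\<^sup>2"
    by (simp add: a_def t0_def c_def m_def algebra_simps)
  finally have Lval: "integral\<^sup>L (P K) L = C / (2 * wh + real n - 1)\<^sup>2" .
  have "integral\<^sup>L (P K) L \<le> integral\<^sup>L (P K) (D n)"
  proof (rule Bochner_Integration.integral_mono[OF L_int])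
    show "integrable (P K) (D n)" using D_int[OF n] by (simp add: K_def)
    fix z assume z: "z \<in> space (P K)"
    have R0: "0 \<le> R z" unfolding R_def using z by (auto intro!: sum_nonneg X_nonneg simp: K_def)
    have Lz: "L z = E2 z * (a - b * (R z - m))"
      unfolding L_def E3_def R_def by (simp add: sum_distrib_left[symmetric] algebra_simps)
    have x1: "0 \<le> w (z 1)" "w (z 1) \<le> wh" using Xb[OF z o1] by auto
    have xn: "0 \<le> w (z (Suc n))" "w (z (Suc n)) \<le> wh" using Xb[OF z sn1] by auto
    have SSn: "SS n z = w (z 1) + R z"
      unfolding R_def using n by (simp add: sum.atLeast_Suc_atMost numeral_2_eq_2)
    have DE: "D n z = E2 z * (1 / (SS (Suc n) z * SS n z))"
      unfolding D_def E2_def by simp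
    show "L z \<le> D n z"
    proof (cases "E2 z = 0")
      case True
      then show ?thesis using D_bounds(1)[OF z n] by (simp add: Lz K_def)
    next
      case False
      then have pos: "0 < w (z 1)" "0 < w (z (Suc n))" using x1 xn by (auto simp: E2_def)
      have s1: "0 < SS n z" using SSn pos R0 by simp
      have s12: "SS n z \<le> SS (Suc n) z" using xn by simp
      have s2t: "SS (Suc n) z \<le> c + R z" using SSn x1 xn by (simp add: c_def)
      have tpos: "0 < c + R z" using s1 s12 s2t by linarith
      have "a - b * (R z - m) = 1 / t0\<^sup>2 - 2 / t0 ^ 3 * ((c + R z) - t0)"
        by (simp add: a_def b_def t0_def)
      also have "\<dots> \<le> 1 / (c + R z)\<^sup>2" by (rule tangent[OF tpos t0pos])
      also have "\<dots> \<le> 1 / (SS (Suc n) z * SS n z)"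
      proof -
        have "SS (Suc n) z * SS n z \<le> (c + R z) * (c + R z)"
          using s1 s12 s2t by (intro mult_mono) auto
        then show ?thesis using s1 s12 by (simp add: power2_eq_square frac_le)
      qed
      finally have "a - b * (R z - m) \<le> 1 / (SS (Suc n) z * SS n z)" .
      moreover have "0 \<le> E2 z" using x1 xn by (simp add: E2_def)
      ultimately show ?thesis unfolding Lz DE by (rule mult_left_mono)
    qed
  qed
  then show ?thesis using Lval by (simp add: K_def)
qed

end

theorem lemma8p3:
  fixes M :: "'a measure" and p q :: "'a \<Rightarrow> real"
  assumes sf: "sigma_finite_measure M"
    and p_meas: "p \<in> borel_measurable M" and q_meas: "q \<in> borel_measurable M"
    and p_nonneg: "\<forall>x\<in>space M. 0 \<le> p x" and q_nonneg: "\<forall>x\<in>space M. 0 \<le> q x"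
    and p_dens: "(\<integral>\<^sup>+ x. ennreal (p x) \<partial>M) = 1"
    and q_dens: "(\<integral>\<^sup>+ x. ennreal (q x) \<partial>M) = 1"
    and q_pos: "\<forall>x\<in>space M. p x > 0 \<longrightarrow> q x > 0"
  shows "(\<forall>x y. 1 \<le> x \<longrightarrow> x \<le> y \<longrightarrow> eps' M p q x \<le> eps' M p q y) \<and>
     (\<forall>x. 1 \<le> x \<longrightarrow> eps' M p q x < 0) \<and>
     (\<forall>N::nat. \<forall>x y. 1 \<le> N \<longrightarrow> real N \<le> x \<longrightarrow> x \<le> y \<longrightarrow> y < real N + 1
            \<longrightarrow> eps' M p q x = eps' M p q y) \<and>
     (\<forall>N::nat. \<forall>x y. 1 \<le> N \<longrightarrow> real N \<le> x \<longrightarrow> x < real N + 1 \<longrightarrow> real N + 1 \<le> y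
            \<longrightarrow> eps' M p q x < eps' M p q y) \<and>
     (bdd_above (wgt p q ` space M) \<longrightarrow>
          (let wh = (SUP x\<in>space M. wgt p q x);
               C = (\<integral> x. indicator {x \<in> space M. p x > 0} x * wgt p q x
                      \<partial>(density M (\<lambda>x. ennreal (p x))))
           in 1 \<le> C \<and> C \<le> wh \<and>
              (\<forall>l::real. 1 \<le> l \<longrightarrow>
                 C / (2 * wh + of_int \<lfloor>l\<rfloor> - 1)\<^sup>2 \<le> \<bar>eps' M p q l\<bar> \<and>
                 \<bar>eps' M p q l\<bar> \<le> wh / (of_int \<lfloor>l\<rfloor> * (of_int \<lfloor>l\<rfloor> + 1)))))"
proof -
  have isirI: "isir M p q"
    by (rule isir.intro[OF sf p_meas q_meas p_nonneg q_nonneg p_dens q_dens q_pos])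
  interpret isir M p q by (rule isirI)
  define d where "d n = eps M p q (Suc n) - eps M p q n" for n
  have eps'_eq: "eps' M p q x = d (nat \<lfloor>x\<rfloor>)" for x
    unfolding eps'_def d_def by simp
  have nat1: "1 \<le> nat \<lfloor>x\<rfloor>" if "1 \<le> x" for x :: real
    using that by linarith
  have dneg: "d n < 0" if "1 \<le> n" for n
    unfolding d_def using d_neg[OF that] .
  have dsuc: "d (Suc k) < d (Suc (Suc k))" for k
    unfolding d_def using d_mono[of "Suc k"] by simp
  have dlt: "d n < d k" if "1 \<le> n" "n < k" for n k
  proof -
    have "(\<lambda>k. d (Suc k)) (n - 1) < (\<lambda>k. d (Suc k)) (k - 1)"
      by (rule lift_Suc_mono_less[of "\<lambda>k. d (Suc k)"]) (use dsuc that in auto)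
    then show ?thesis using that by simp
  qed
  have dle: "d n \<le> d k" if "1 \<le> n" "n \<le> k" for n k
  proof (cases "n = k")
    case False
    then have "n < k" using that(2) by simp
    then show ?thesis using dlt[OF that(1)] by (simp add: less_imp_le)
  qed simp
  have P1: "\<forall>x y. 1 \<le> x \<longrightarrow> x \<le> y \<longrightarrow> eps' M p q x \<le> eps' M p q y"
  proof (intro allI impI)
    fix x y :: real assume "1 \<le> x" "x \<le> y"
    then show "eps' M p q x \<le> eps' M p q y"
      unfolding eps'_eq by (intro dle nat1) (auto intro: nat_mono floor_mono)
  qed
  have P2: "\<forall>x. 1 \<le> x \<longrightarrow> eps' M p q x < 0"
    unfolding eps'_eq using dneg nat1 by auto
  have P3: "\<forall>N::nat. \<forall>x y. 1 \<le> N \<longrightarrow> real N \<le> x \<longrightarrow> x \<le> y \<longrightarrow> y < real N + 1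
            \<longrightarrow> eps' M p q x = eps' M p q y"
  proof (intro allI impI)
    fix N :: nat and x y :: real
    assume "1 \<le> N" "real N \<le> x" "x \<le> y" "y < real N + 1"
    then have "\<lfloor>x\<rfloor> = int N" "\<lfloor>y\<rfloor> = int N" by (simp_all add: floor_eq_iff)
    then show "eps' M p q x = eps' M p q y" unfolding eps'_eq by simp
  qed
  have P4: "\<forall>N::nat. \<forall>x y. 1 \<le> N \<longrightarrow> real N \<le> x \<longrightarrow> x < real N + 1 \<longrightarrow> real N + 1 \<le> y
            \<longrightarrow> eps' M p q x < eps' M p q y"
  proof (intro allI impI)
    fix N :: nat and x y :: real
    assume h: "1 \<le> N" "real N \<le> x" "x < real N + 1" "real N + 1 \<le> y"
    then have "\<lfloor>x\<rfloor> = int N" by (simp add: floor_eq_iff)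
    moreover have "N + 1 \<le> nat \<lfloor>y\<rfloor>" using h(4) by (simp add: le_nat_floor)
    ultimately show "eps' M p q x < eps' M p q y" unfolding eps'_eq using h(1) by (intro dlt) auto
  qed
  have P5: "bdd_above (wgt p q ` space M) \<longrightarrow>
          (let wh = (SUP x\<in>space M. wgt p q x);
               C = (\<integral> x. indicator {x \<in> space M. p x > 0} x * wgt p q x
                      \<partial>(density M (\<lambda>x. ennreal (p x))))
           in 1 \<le> C \<and> C \<le> wh \<and>
              (\<forall>l::real. 1 \<le> l \<longrightarrow>
                 C / (2 * wh + of_int \<lfloor>l\<rfloor> - 1)\<^sup>2 \<le> \<bar>eps' M p q l\<bar> \<and>
                 \<bar>eps' M p q l\<bar> \<le> wh / (of_int \<lfloor>l\<rfloor> * (of_int \<lfloor>l\<rfloor> + 1))))"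
  proof
    assume b: "bdd_above (wgt p q ` space M)"
    interpret isir_b M p q by (rule isir_b.intro[OF isirI isir_b_axioms.intro[OF b]])
    have absd: "\<bar>eps' M p q l\<bar> = integral\<^sup>L (P {1..Suc (nat \<lfloor>l\<rfloor>)}) (D (nat \<lfloor>l\<rfloor>))" if l: "1 \<le> l" for l :: real
    proof -
      have "eps' M p q l = - integral\<^sup>L (P {1..Suc (nat \<lfloor>l\<rfloor>)}) (D (nat \<lfloor>l\<rfloor>))"
        unfolding eps'_eq d_def by (rule d_eq) (use nat1[OF l] in auto)
      moreover have "eps' M p q l < 0" using P2 l by auto
      ultimately show ?thesis by simp
    qed
    have ofl: "(of_int \<lfloor>l\<rfloor> :: real) = real (nat \<lfloor>l\<rfloor>)" if "1 \<le> l" for l :: real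
      using that by simp
    show "let wh = (SUP x\<in>space M. wgt p q x);
               C = (\<integral> x. indicator {x \<in> space M. p x > 0} x * wgt p q x
                      \<partial>(density M (\<lambda>x. ennreal (p x))))
           in 1 \<le> C \<and> C \<le> wh \<and>
              (\<forall>l::real. 1 \<le> l \<longrightarrow>
                 C / (2 * wh + of_int \<lfloor>l\<rfloor> - 1)\<^sup>2 \<le> \<bar>eps' M p q l\<bar> \<and>
                 \<bar>eps' M p q l\<bar> \<le> wh / (of_int \<lfloor>l\<rfloor> * (of_int \<lfloor>l\<rfloor> + 1)))"
      unfolding Let_def C_stmt wh_def[symmetric]
    proof (intro conjI allI impI)
      show "1 \<le> C" by (rule C_ge1)
      show "C \<le> wh" by (rule C_le)
      fix l :: real assume l: "1 \<le> l"
      show "C / (2 * wh + of_int \<lfloor>l\<rfloor> - 1)\<^sup>2 \<le> \<bar>eps' M p q l\<bar>"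
        unfolding absd[OF l] ofl[OF l] by (rule D_lower[OF nat1[OF l]])
      show "\<bar>eps' M p q l\<bar> \<le> wh / (of_int \<lfloor>l\<rfloor> * (of_int \<lfloor>l\<rfloor> + 1))"
        unfolding absd[OF l] ofl[OF l] by (rule D_upper[OF nat1[OF l]])
    qed
  qed
  show ?thesis using P1 P2 P3 P4 P5 by blast
qed

end
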